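(* Let $G$ be a group acting on a manifold $X$ by homeomorphisms and let $f\colon X\to X$ be a $G$-equivariant map whose fixed point classes are compact. Then for every fixed point $x$ of $f$ and every $g\in G$, the fixed point indices of the fixed point classes of $x$ and $gx$ agree: $i(f,[x])=i(f,[gx])$.
   Context: Two fixed points $x,y$ of $f$ lie in the same fixed point class if there is a path $\alpha$ from $x$ to $y$ with $\alpha\simeq f(\alpha)$ rel endpoints. For a class $F$, $i(f,[x])$ is the fixed point index of $f$ on a neighbourhood $U$ of $F=[x]$ containing no other fixed points: in a chart $\psi$, with $V\subset U$ a ball neighbourhood of $F$ with $f(V)\subseteq U$, it is the integer $i$ with $(\mathrm{id}-\psi f\psi^{-1})_*[S^n]_F=i\cdot[S^n]$ under $H_n(\psi V,\psi V-\psi F)\to H_n(\mathbb{R}^n,\mathbb{R}^n-\{0\})\cong\mathbb{Z}$. *)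

theory Defs
  imports "HOL-Analysis.Analysis" "HOL-Homology.Homology" "HOL-Algebra.Group_Action"
begin

definition is_manifold :: "'b::euclidean_space itself \<Rightarrow> 'a topology \<Rightarrow> bool" where
  "is_manifold TYPE('b) X \<longleftrightarrow>
     Hausdorff_space X \<and> second_countable X \<and>
     (\<forall>x\<in>topspace X. \<exists>W (\<psi>::'a \<Rightarrow> 'b).
         openin X W \<and> x \<in> W \<and> open (\<psi> ` W) \<and>
         homeomorphic_map (subtopology X W) (top_of_set (\<psi> ` W)) \<psi>)"

definition fp_class :: "'a topology \<Rightarrow> ('a \<Rightarrow> 'a) \<Rightarrow> 'a \<Rightarrow> 'a set" where
  "fp_class X f x =
     {y \<in> topspace X. f y = y \<and>
        (\<exists>\<alpha>. pathin X \<alpha> \<and> \<alpha> 0 = x \<and> \<alpha> 1 = y \<and>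
             homotopic_with (\<lambda>h. h 0 = x \<and> h 1 = y) (top_of_set {0..1}) X \<alpha> (f \<circ> \<alpha>))}"

text \<open>The local class of F is the image of a class c of
  H_n(psi V, psi V - B), B a closed ball around psi F inside psi V; the reference
  class [S^n] is the image of c in H_n(R^n, R^n - 0) via translation of the centre
  of B to 0. The condition is required for all c (H_n(psi V, psi V - B) is
  infinite cyclic, so this is equivalent to requiring it for a generator).\<close>
definition is_fp_index :: "'b::euclidean_space itself \<Rightarrow> 'a topology \<Rightarrow> ('a \<Rightarrow> 'a) \<Rightarrow> 'a set \<Rightarrow> int \<Rightarrow> bool" where
  "is_fp_index TYPE('b) X f F i \<longleftrightarrow>
     (\<exists>U W (\<psi>::'a \<Rightarrow> 'b) V (a::'b) r s.
        openin X U \<and> F \<subseteq> U \<and> {y \<in> U. f y = y} = F \<and>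
        openin X W \<and> U \<subseteq> W \<and> open (\<psi> ` W) \<and>
        homeomorphic_map (subtopology X W) (top_of_set (\<psi> ` W)) \<psi> \<and>
        F \<subseteq> V \<and> V \<subseteq> U \<and> f ` V \<subseteq> U \<and> \<psi> ` V = ball a r \<and>
        0 \<le> s \<and> s < r \<and> \<psi> ` F \<subseteq> cball a s \<and>
        (let n = int DIM('b); PV = ball a r; B = cball a s;
             g = (\<lambda>z. z - \<psi> (f (inv_into W \<psi> z)));
             H0 = relative_homology_group n (euclidean::'b topology) (- {0})
         in \<forall>c \<in> carrier (relative_homology_group n (top_of_set PV) (PV - B)).
              hom_induced n (top_of_set PV) (PV - \<psi> ` F) euclidean (- {0}) g
                (hom_induced n (top_of_set PV) (PV - B) (top_of_set PV) (PV - \<psi> ` F) id c)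
              = (hom_induced n (top_of_set PV) (PV - B) euclidean (- {0}) (\<lambda>z. z - a) c)
                  [^]\<^bsub>H0\<^esub> i))"

definition fp_index :: "'b::euclidean_space itself \<Rightarrow> 'a topology \<Rightarrow> ('a \<Rightarrow> 'a) \<Rightarrow> 'a set \<Rightarrow> int" where
  "fp_index TYPE('b) X f F = (THE i. is_fp_index TYPE('b) X f F i)"

end

theory Submission
  imports Defs
begin

lemma fp_class_image:
  assumes hc: "continuous_map X X h"
    and comm: "\<And>y. y \<in> topspace X \<Longrightarrow> f (h y) = h (f y)"
    and fc: "continuous_map X X f"
  shows "h ` fp_class X f x \<subseteq> fp_class X f (h x)"
proof
  fix z assume "z \<in> h ` fp_class X f x"
  then obtain y \<alpha> where y: "z = h y" "y \<in> topspace X" "f y = y"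
    and p: "pathin X \<alpha>" "\<alpha> 0 = x" "\<alpha> 1 = y"
    and ht: "homotopic_with (\<lambda>k. k 0 = x \<and> k 1 = y) (top_of_set {0..1}) X \<alpha> (f \<circ> \<alpha>)"
    unfolding fp_class_def by blast
  have hp: "pathin X (h \<circ> \<alpha>)" using p(1) hc by (rule pathin_compose)
  have ht2: "homotopic_with (\<lambda>k. k 0 = h x \<and> k 1 = h y) (top_of_set {0..1}) X (h \<circ> \<alpha>) (h \<circ> (f \<circ> \<alpha>))"
    by (rule homotopic_with_compose_continuous_map_left[OF ht hc]) auto
  have ta: "\<And>t. t \<in> {0..1} \<Longrightarrow> \<alpha> t \<in> topspace X"
    using p(1) unfolding pathin_def continuous_map_def by auto
  have ht3: "homotopic_with (\<lambda>k. k 0 = h x \<and> k 1 = h y) (top_of_set {0..1}) X (h \<circ> \<alpha>) (f \<circ> (h \<circ> \<alpha>))"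
  proof (rule homotopic_with_eq[OF ht2])
    fix t assume "t \<in> topspace (top_of_set {0..1::real})"
    then show "(f \<circ> (h \<circ> \<alpha>)) t = (h \<circ> (f \<circ> \<alpha>)) t" using ta comm by auto
  next
    fix k k' :: "real \<Rightarrow> 'a"
    assume "\<And>t. t \<in> topspace (top_of_set {0..1::real}) \<Longrightarrow> k t = k' t"
    then have "k 0 = k' 0" "k 1 = k' 1" by auto
    then show "(k 0 = h x \<and> k 1 = h y) = (k' 0 = h x \<and> k' 1 = h y)" by simp
  qed simp
  have "h y \<in> topspace X" using hc y(2) by (auto simp: continuous_map_def)
  moreover have "f (h y) = h y" using comm y by simp
  ultimately show "z \<in> fp_class X f (h x)"
    unfolding fp_class_def using hp ht3 p y by auto
qed

lemma fp_index_image: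
  fixes X :: "'a topology" and f h k :: "'a \<Rightarrow> 'a"
  assumes hh: "homeomorphic_map X X h" and hk: "homeomorphic_map X X k"
    and kh: "\<And>y. y \<in> topspace X \<Longrightarrow> k (h y) = y"
    and comm: "\<And>y. y \<in> topspace X \<Longrightarrow> f (h y) = h (f y)"
    and fc: "\<And>y. y \<in> topspace X \<Longrightarrow> f y \<in> topspace X"
    and ix: "is_fp_index TYPE('b::euclidean_space) X f F i"
  shows "is_fp_index TYPE('b) X f (h ` F) i"
proof -
  obtain U W V a r s and \<psi> :: "'a \<Rightarrow> 'b" where
    U: "openin X U" "F \<subseteq> U" "{y \<in> U. f y = y} = F" and
    W: "openin X W" "U \<subseteq> W" "open (\<psi> ` W)"
      "homeomorphic_map (subtopology X W) (top_of_set (\<psi> ` W)) \<psi>" and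
    V: "F \<subseteq> V" "V \<subseteq> U" "f ` V \<subseteq> U" "\<psi> ` V = ball a r" and
    s: "0 \<le> s" "s < r" "\<psi> ` F \<subseteq> cball a s" and
    L: "let n = int DIM('b); PV = ball a r; B = cball a s;
             g = (\<lambda>z. z - \<psi> (f (inv_into W \<psi> z)));
             H0 = relative_homology_group n (euclidean::'b topology) (- {0})
         in \<forall>c \<in> carrier (relative_homology_group n (top_of_set PV) (PV - B)).
              hom_induced n (top_of_set PV) (PV - \<psi> ` F) euclidean (- {0}) g
                (hom_induced n (top_of_set PV) (PV - B) (top_of_set PV) (PV - \<psi> ` F) id c)
              = (hom_induced n (top_of_set PV) (PV - B) euclidean (- {0}) (\<lambda>z. z - a) c)
                  [^]\<^bsub>H0\<^esub> i"
    using ix unfolding is_fp_index_def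
    apply (elim exE conjE)
    by (rule that; assumption)
  have WX: "W \<subseteq> topspace X" using W(1) by (simp add: openin_subset)
  have injh: "inj_on h (topspace X)" using hh by (rule homeomorphic_imp_injective_map)
  have hX: "h ` topspace X = topspace X" using hh by (simp add: homeomorphic_imp_surjective_map)
  have khS: "\<And>S. S \<subseteq> topspace X \<Longrightarrow> k ` h ` S = S"
  proof -
    fix S assume "S \<subseteq> topspace X"
    then show "k ` h ` S = S" using kh by (force simp: image_comp)
  qed
  have injpsi: "inj_on \<psi> W"
    using homeomorphic_imp_injective_map[OF W(4)] WX by (simp add: Int_absorb1)
  define \<psi>' where "\<psi>' = \<psi> \<circ> k"
  have img: "\<And>S. S \<subseteq> topspace X \<Longrightarrow> \<psi>' ` h ` S = \<psi> ` S"
    unfolding \<psi>'_def by (metis image_comp khS)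
  have U': "openin X (h ` U)"
    using homeomorphic_map_openness_eq[OF hh] U(1) by blast
  have W': "openin X (h ` W)"
    using homeomorphic_map_openness_eq[OF hh] W(1) by blast
  have hWX: "h ` W \<subseteq> topspace X" using WX hX by blast
  have fix': "{y \<in> h ` U. f y = y} = h ` F"
  proof
    show "{y \<in> h ` U. f y = y} \<subseteq> h ` F"
    proof clarify
      fix u assume u: "u \<in> U" "f (h u) = h u"
      have uX: "u \<in> topspace X" using u WX W(2) by blast
      then have "h (f u) = h u" using u comm by simp
      then have "f u = u" using injh uX fc by (meson inj_onD)
      then show "h u \<in> h ` F" using U(3) u by blast
    qed
  next
    show "h ` F \<subseteq> {y \<in> h ` U. f y = y}"
    proof clarify
      fix u assume u: "u \<in> F"
      then have "u \<in> U" "f u = u" using U(3) by auto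
      moreover have "u \<in> topspace X" using \<open>u \<in> U\<close> WX W(2) by blast
      ultimately show "h u \<in> h ` U \<and> f (h u) = h u" using comm by simp
    qed
  qed
  have hom': "homeomorphic_map (subtopology X (h ` W)) (top_of_set (\<psi>' ` h ` W)) \<psi>'"
  proof -
    have "k ` (topspace X \<inter> h ` W) = topspace X \<inter> W"
      using khS[OF WX] hWX WX by (simp add: Int_absorb1)
    then have "homeomorphic_map (subtopology X (h ` W)) (subtopology X W) k"
      by (rule homeomorphic_map_subtopologies[OF hk])
    then have "homeomorphic_map (subtopology X (h ` W)) (top_of_set (\<psi> ` W)) (\<psi> \<circ> k)"
      using W(4) by (rule homeomorphic_map_compose)
    moreover have "\<psi>' ` h ` W = \<psi> ` W" by (rule img[OF WX])
    ultimately show ?thesis unfolding \<psi>'_def by simp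
  qed
  have fV': "f ` h ` V \<subseteq> h ` U"
  proof clarify
    fix v assume "v \<in> V"
    then have "v \<in> topspace X" using V(2) W(2) WX by blast
    then have "f (h v) = h (f v)" by (rule comm)
    then show "f (h v) \<in> h ` U" using V(3) \<open>v \<in> V\<close> by auto
  qed
  have VX: "V \<subseteq> topspace X" and FX: "F \<subseteq> topspace X" using V U W WX by auto
  have geq: "\<And>z. z \<in> ball a r \<Longrightarrow> z - \<psi>' (f (inv_into (h ` W) \<psi>' z)) = z - \<psi> (f (inv_into W \<psi> z))"
  proof -
    fix z assume z: "z \<in> ball a r"
    define v where "v = inv_into W \<psi> z"
    have zW: "z \<in> \<psi> ` W" using z V(4) V(2) W(2) by blast
    have vW: "v \<in> W" unfolding v_def using zW by (rule inv_into_into)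
    have pv: "\<psi> v = z" unfolding v_def using zW by (rule f_inv_into_f)
    have vX: "v \<in> topspace X" using vW WX by blast
    have injpsi': "inj_on \<psi>' (h ` W)"
      using homeomorphic_imp_injective_map[OF hom'] hWX by (simp add: Int_absorb1)
    have "\<psi>' (h v) = z" unfolding \<psi>'_def using kh vX pv by simp
    then have "inv_into (h ` W) \<psi>' z = h v"
      using injpsi' vW by (meson image_eqI inv_into_f_eq)
    then have "\<psi>' (f (inv_into (h ` W) \<psi>' z)) = \<psi> (f v)"
      unfolding \<psi>'_def using comm vX kh fc by simp
    then show "z - \<psi>' (f (inv_into (h ` W) \<psi>' z)) = z - \<psi> (f (inv_into W \<psi> z))"
      unfolding v_def by simp
  qed
  have heq: "hom_induced (int DIM('b)) (top_of_set (ball a r)) (ball a r - \<psi> ` F) euclidean (- {0})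
               (\<lambda>z. z - \<psi>' (f (inv_into (h ` W) \<psi>' z)))
           = hom_induced (int DIM('b)) (top_of_set (ball a r)) (ball a r - \<psi> ` F) euclidean (- {0})
               (\<lambda>z. z - \<psi> (f (inv_into W \<psi> z)))"
    by (rule hom_induced_eq) (simp add: geq)
  have L': "let n = int DIM('b); PV = ball a r; B = cball a s;
             g = (\<lambda>z. z - \<psi>' (f (inv_into (h ` W) \<psi>' z)));
             H0 = relative_homology_group n (euclidean::'b topology) (- {0})
         in \<forall>c \<in> carrier (relative_homology_group n (top_of_set PV) (PV - B)).
              hom_induced n (top_of_set PV) (PV - \<psi>' ` h ` F) euclidean (- {0}) g
                (hom_induced n (top_of_set PV) (PV - B) (top_of_set PV) (PV - \<psi>' ` h ` F) id c)
              = (hom_induced n (top_of_set PV) (PV - B) euclidean (- {0}) (\<lambda>z. z - a) c)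
                  [^]\<^bsub>H0\<^esub> i"
    using L unfolding Let_def img[OF FX] heq .
  have a1: "h ` F \<subseteq> h ` U" "h ` U \<subseteq> h ` W" "h ` F \<subseteq> h ` V" "h ` V \<subseteq> h ` U"
    using U(2) W(2) V(1) V(2) by (auto intro: image_mono)
  have a2: "open (\<psi>' ` h ` W)" "\<psi>' ` h ` V = ball a r" "\<psi>' ` h ` F \<subseteq> cball a s"
    using W(3) V(4) s(3) img[OF WX] img[OF VX] img[OF FX] by simp_all
  show ?thesis
    unfolding is_fp_index_def
    apply (rule exI[of _ "h ` U"], rule exI[of _ "h ` W"], rule exI[of _ \<psi>'],
           rule exI[of _ "h ` V"], rule exI[of _ a], rule exI[of _ r], rule exI[of _ s])
    using U' fix' W' hom' fV' s(1) s(2) L' a1 a2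
    by (intro conjI) assumption+
qed

theorem proposition4p13:
  fixes G :: "('g, 'm) monoid_scheme" and \<phi> :: "'g \<Rightarrow> 'a \<Rightarrow> 'a"
    and X :: "'a topology" and f :: "'a \<Rightarrow> 'a"
  assumes manifold: "is_manifold TYPE('b::euclidean_space) X"
    and action: "group_action G (topspace X) \<phi>"
    and homeo: "\<And>g. g \<in> carrier G \<Longrightarrow> homeomorphic_map X X (\<phi> g)"
    and cont: "continuous_map X X f"
    and equivariant: "\<And>g y. g \<in> carrier G \<Longrightarrow> y \<in> topspace X \<Longrightarrow> f (\<phi> g y) = \<phi> g (f y)"
    and compact_classes: "\<And>y. y \<in> topspace X \<Longrightarrow> f y = y \<Longrightarrow> compactin X (fp_class X f y)"
    and x: "x \<in> topspace X" "f x = x"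
    and g: "g \<in> carrier G"
  shows "fp_index TYPE('b) X f (fp_class X f x) = fp_index TYPE('b) X f (fp_class X f (\<phi> g x))"
proof -
  interpret A: group_action G "topspace X" \<phi> by (rule action)
  have grp: "group G" using A.group_hom unfolding group_hom_def by auto
  have ig: "inv\<^bsub>G\<^esub> g \<in> carrier G" using grp g by (simp add: group.inv_closed)
  define h where "h = \<phi> g"
  define k where "k = \<phi> (inv\<^bsub>G\<^esub> g)"
  have one: "\<And>y. y \<in> topspace X \<Longrightarrow> \<phi> \<one>\<^bsub>G\<^esub> y = y"
    using A.id_eq_one by (metis restrict_apply')
  have kh: "\<And>y. y \<in> topspace X \<Longrightarrow> k (h y) = y"
    unfolding h_def k_def using A.composition_rule[OF _ ig g] one grp g
    by (metis group.l_inv)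
  have hk: "\<And>y. y \<in> topspace X \<Longrightarrow> h (k y) = y"
    unfolding h_def k_def using A.composition_rule[OF _ g ig] one grp g
    by (metis group.r_inv)
  have hh: "homeomorphic_map X X h" unfolding h_def by (rule homeo[OF g])
  have hkm: "homeomorphic_map X X k" unfolding k_def by (rule homeo[OF ig])
  have commh: "\<And>y. y \<in> topspace X \<Longrightarrow> f (h y) = h (f y)" unfolding h_def by (rule equivariant[OF g])
  have commk: "\<And>y. y \<in> topspace X \<Longrightarrow> f (k y) = k (f y)" unfolding k_def by (rule equivariant[OF ig])
  have fc: "\<And>y. y \<in> topspace X \<Longrightarrow> f y \<in> topspace X" using cont by (auto simp: continuous_map_def)
  have hc: "continuous_map X X h" using hh by (rule homeomorphic_imp_continuous_map)
  have kc: "continuous_map X X k" using hkm by (rule homeomorphic_imp_continuous_map)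
  define C1 where "C1 = fp_class X f x"
  define C2 where "C2 = fp_class X f (h x)"
  have C1X: "C1 \<subseteq> topspace X" and C2X: "C2 \<subseteq> topspace X"
    unfolding C1_def C2_def fp_class_def by auto
  have s1: "h ` C1 \<subseteq> C2" unfolding C1_def C2_def by (rule fp_class_image[OF hc commh cont])
  have s2: "k ` C2 \<subseteq> C1"
    using fp_class_image[OF kc commk cont, of "h x"] kh[OF x(1)] unfolding C1_def C2_def by simp
  have e1: "k ` C2 = C1"
  proof
    show "C1 \<subseteq> k ` C2"
    proof
      fix y assume "y \<in> C1"
      then have "h y \<in> C2" "k (h y) = y" using s1 kh C1X by auto
      then show "y \<in> k ` C2" by force
    qed
  qed (rule s2)
  have e2: "h ` C1 = C2"
  proof
    show "C2 \<subseteq> h ` C1"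
    proof
      fix y assume "y \<in> C2"
      then have "k y \<in> C1" "h (k y) = y" using s2 hk C2X by auto
      then show "y \<in> h ` C1" by force
    qed
  qed (rule s1)
  have "\<And>i. is_fp_index TYPE('b) X f C1 i \<longleftrightarrow> is_fp_index TYPE('b) X f C2 i"
  proof
    fix i assume "is_fp_index TYPE('b) X f C1 i"
    from fp_index_image[OF hh hkm kh commh fc this] show "is_fp_index TYPE('b) X f C2 i"
      unfolding e2 .
  next
    fix i assume "is_fp_index TYPE('b) X f C2 i"
    from fp_index_image[OF hkm hh hk commk fc this] show "is_fp_index TYPE('b) X f C1 i"
      unfolding e1 .
  qed
  then have "is_fp_index TYPE('b) X f C1 = is_fp_index TYPE('b) X f C2" by (intro ext)
  then show ?thesis unfolding fp_index_def C1_def[symmetric] h_def[symmetric] C2_def[symmetric]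
    by simp
qed

end
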